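(* Let $x\in\mathbb{R}^N$, let $1\le T\le N$, $J\ge 1$, $\sigma>0$, and let $\Phi$ be the random filterbank with $J$ i.i.d. filters $w_1,\dots,w_J\sim\mathcal{N}(0,\sigma^2 I_T)$ of length $T$. Then $$\mathbb{E}\big[\|\Phi x\|^2\big]=JT\sigma^2\|x\|^2,\qquad \mathbb{V}\big[\|\Phi x\|^2\big]=2J\sigma^4\sum_{\tau=-T}^{T}\big(T-|\tau|\big)R_{xx}(\tau)^2 .$$
   Context: For $x\in\mathbb{R}^N$ and $w\in\mathbb{R}^T$ with $T\le N$, the circular convolution is $(x*w)[n]=\sum_{k=0}^{T-1}w[k]\,x[(n-k)\bmod N]$ for $0\le n<N$. The circular autocorrelation of $x$ is $R_{xx}(t)=\sum_{k=0}^{N-1}x[k]\,x[(k-t)\bmod N]$ for any integer $t$ (so $R_{xx}(-t)=R_{xx}(t)$ and $R_{xx}(0)=\|x\|^2$). A filterbank with filters $w_1,\dots,w_J\in\mathbb{R}^T$ is the linear map $\Phi:\mathbb{R}^N\to\mathbb{R}^{N\times J}$, $(\Phi x)[n,j]=(x*w_j)[n]$, and $\|\Phi x\|^2=\sum_{j=1}^J\|x*w_j\|^2$ (Euclidean norms). A random filterbank has i.i.d. Gaussian filters as specified. *)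

theory Defs
  imports "HOL-Probability.Probability"
begin

text \<open>Signals in R^N are functions nat => real, only indices 0..N-1 matter.
  Filters in R^T are functions nat => real, only indices 0..T-1 matter.\<close>

definition circ_conv :: "nat \<Rightarrow> nat \<Rightarrow> (nat \<Rightarrow> real) \<Rightarrow> (nat \<Rightarrow> real) \<Rightarrow> nat \<Rightarrow> real" where
  "circ_conv N T x w n = (\<Sum>k<T. w k * x (nat ((int n - int k) mod int N)))"

definition sq_norm_vec :: "nat \<Rightarrow> (nat \<Rightarrow> real) \<Rightarrow> real" where
  "sq_norm_vec N x = (\<Sum>k<N. (x k)\<^sup>2)"

definition autocorr :: "nat \<Rightarrow> (nat \<Rightarrow> real) \<Rightarrow> int \<Rightarrow> real" where
  "autocorr N x t = (\<Sum>k<N. x k * x (nat ((int k - t) mod int N)))"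

definition filterbank_sq_norm :: "nat \<Rightarrow> nat \<Rightarrow> nat \<Rightarrow> (nat \<Rightarrow> nat \<Rightarrow> real) \<Rightarrow> (nat \<Rightarrow> real) \<Rightarrow> real" where
  "filterbank_sq_norm N T J w x = (\<Sum>j<J. sq_norm_vec N (circ_conv N T x (w j)))"

text \<open>Law of the J*T i.i.d. N(0,sigma^2) filter coefficients: omega (j,k) = w_j[k].\<close>
definition gauss_filters :: "nat \<Rightarrow> nat \<Rightarrow> real \<Rightarrow> ((nat \<times> nat) \<Rightarrow> real) measure" where
  "gauss_filters J T \<sigma> = PiM ({..<J} \<times> {..<T}) (\<lambda>_. density lborel (normal_density 0 \<sigma>))"

end

theory Submission
  imports Defs
begin


lemma int_sum1:
  fixes P :: "'i \<Rightarrow> 'a \<Rightarrow> real"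
  assumes "finite A" "\<And>j. j \<in> A \<Longrightarrow> integrable M (P j)"
  shows "integrable M (\<lambda>\<omega>. \<Sum>j\<in>A. P j \<omega>) \<and> integral\<^sup>L M (\<lambda>\<omega>. \<Sum>j\<in>A. P j \<omega>) = (\<Sum>j\<in>A. integral\<^sup>L M (P j))"
  using assms by (simp add: Bochner_Integration.integral_sum)

lemma int_sum3:
  fixes P :: "'i \<Rightarrow> 'j \<Rightarrow> 'k \<Rightarrow> 'a \<Rightarrow> real"
  assumes "finite A" "finite B" "finite C" "\<And>j k l. j \<in> A \<Longrightarrow> k \<in> B \<Longrightarrow> l \<in> C \<Longrightarrow> integrable M (P j k l)"
  shows "integrable M (\<lambda>\<omega>. \<Sum>j\<in>A. \<Sum>k\<in>B. \<Sum>l\<in>C. P j k l \<omega>) \<and>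
     integral\<^sup>L M (\<lambda>\<omega>. \<Sum>j\<in>A. \<Sum>k\<in>B. \<Sum>l\<in>C. P j k l \<omega>) = (\<Sum>j\<in>A. \<Sum>k\<in>B. \<Sum>l\<in>C. integral\<^sup>L M (P j k l))"
proof -
  have a: "integrable M (\<lambda>\<omega>. \<Sum>l\<in>C. P j k l \<omega>) \<and> integral\<^sup>L M (\<lambda>\<omega>. \<Sum>l\<in>C. P j k l \<omega>) = (\<Sum>l\<in>C. integral\<^sup>L M (P j k l))"
    if "j \<in> A" "k \<in> B" for j k using int_sum1[OF assms(3), of M "P j k"] assms(4) that by blast
  have b: "integrable M (\<lambda>\<omega>. \<Sum>k\<in>B. \<Sum>l\<in>C. P j k l \<omega>) \<and> integral\<^sup>L M (\<lambda>\<omega>. \<Sum>k\<in>B. \<Sum>l\<in>C. P j k l \<omega>) = (\<Sum>k\<in>B. \<Sum>l\<in>C. integral\<^sup>L M (P j k l))"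
    if "j \<in> A" for j using int_sum1[OF assms(2), of M "\<lambda>k \<omega>. \<Sum>l\<in>C. P j k l \<omega>"] a that by simp
  show ?thesis using int_sum1[OF assms(1), of M "\<lambda>j \<omega>. \<Sum>k\<in>B. \<Sum>l\<in>C. P j k l \<omega>"] b by simp
qed

lemma int_sum6:
  fixes P :: "'i \<Rightarrow> 'j \<Rightarrow> 'k \<Rightarrow> 'i \<Rightarrow> 'j \<Rightarrow> 'k \<Rightarrow> 'a \<Rightarrow> real"
  assumes "finite A" "finite B" "finite C"
    "\<And>j k l j' k' l'. j \<in> A \<Longrightarrow> k \<in> B \<Longrightarrow> l \<in> C \<Longrightarrow> j' \<in> A \<Longrightarrow> k' \<in> B \<Longrightarrow> l' \<in> C \<Longrightarrow> integrable M (P j k l j' k' l')"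
  shows "integrable M (\<lambda>\<omega>. \<Sum>j\<in>A. \<Sum>k\<in>B. \<Sum>l\<in>C. \<Sum>j'\<in>A. \<Sum>k'\<in>B. \<Sum>l'\<in>C. P j k l j' k' l' \<omega>) \<and>
     integral\<^sup>L M (\<lambda>\<omega>. \<Sum>j\<in>A. \<Sum>k\<in>B. \<Sum>l\<in>C. \<Sum>j'\<in>A. \<Sum>k'\<in>B. \<Sum>l'\<in>C. P j k l j' k' l' \<omega>) =
     (\<Sum>j\<in>A. \<Sum>k\<in>B. \<Sum>l\<in>C. \<Sum>j'\<in>A. \<Sum>k'\<in>B. \<Sum>l'\<in>C. integral\<^sup>L M (P j k l j' k' l'))"
proof -
  have a: "integrable M (\<lambda>\<omega>. \<Sum>j'\<in>A. \<Sum>k'\<in>B. \<Sum>l'\<in>C. P j k l j' k' l' \<omega>) \<and>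
     integral\<^sup>L M (\<lambda>\<omega>. \<Sum>j'\<in>A. \<Sum>k'\<in>B. \<Sum>l'\<in>C. P j k l j' k' l' \<omega>) = (\<Sum>j'\<in>A. \<Sum>k'\<in>B. \<Sum>l'\<in>C. integral\<^sup>L M (P j k l j' k' l'))"
    if "j \<in> A" "k \<in> B" "l \<in> C" for j k l
    using int_sum3[OF assms(1-3), of M "P j k l"] assms(4) that by blast
  show ?thesis using int_sum3[OF assms(1-3), of M "\<lambda>j k l \<omega>. \<Sum>j'\<in>A. \<Sum>k'\<in>B. \<Sum>l'\<in>C. P j k l j' k' l' \<omega>"] a
    by (simp cong: sum.cong)
qed



definition gm :: "real \<Rightarrow> nat \<Rightarrow> real" where
  "gm \<sigma> n = (if odd n then 0 else fact n / ((2 / \<sigma>\<^sup>2)^(n div 2) * fact (n div 2)))"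

lemma gauss_mom:
  assumes "\<sigma> > 0"
  shows "integrable (density lborel (normal_density 0 \<sigma>)) (\<lambda>z. z ^ n)
     \<and> integral\<^sup>L (density lborel (normal_density 0 \<sigma>)) (\<lambda>z. z ^ n) = gm \<sigma> n"
proof (cases "even n")
  case True
  then obtain k where k: "n = 2 * k" by (auto elim: evenE)
  have h: "has_bochner_integral lborel (\<lambda>x. normal_density 0 \<sigma> x * x ^ n) (gm \<sigma> n)"
    using normal_moment_even[OF assms, of 0 k] k by (simp add: gm_def)
  show ?thesis
    using h by (auto simp: integrable_density integral_density has_bochner_integral_iff)
next
  case False
  then obtain k where k: "n = 2 * k + 1" by (auto elim: oddE)
  have h: "has_bochner_integral lborel (\<lambda>x. normal_density 0 \<sigma> x * x ^ n) (gm \<sigma> n)"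
    using normal_moment_odd[OF assms, of 0 k] k False by (simp add: gm_def)
  show ?thesis
    using h by (auto simp: integrable_density integral_density has_bochner_integral_iff)
qed

lemma gm_vals0: "gm s 0 = 1" "gm s 1 = 0" "gm s 3 = 0"
  by (simp_all add: gm_def)
lemma gm_vals2: "s > 0 \<Longrightarrow> gm s 2 = s\<^sup>2"
  by (simp add: gm_def power2_eq_square field_simps)
lemma gm_vals4: "s > 0 \<Longrightarrow> gm s 4 = 3 * s^4"
proof -
  have "fact 4 = (24::real)" by (simp add: fact_numeral)
  moreover have "(4::nat) div 2 = 2" "\<not> odd (4::nat)" by simp_all
  ultimately show "s > 0 \<Longrightarrow> gm s 4 = 3 * s^4" unfolding gm_def by (simp add: power2_eq_square field_simps power4_eq_xxxx)
qed
lemmas gm_vals = gm_vals0 gm_vals2 gm_vals4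
lemma gm_valsS: "gm s (Suc 0) = 0" "gm s (Suc (Suc (Suc 0))) = 0" "s > 0 \<Longrightarrow> gm s (Suc (Suc 0)) = s\<^sup>2"
   "s > 0 \<Longrightarrow> gm s (Suc (Suc (Suc (Suc 0)))) = 3 * s^4"
  using gm_vals[of s] by (simp_all add: eval_nat_numeral)

lemma prod_mom:
  fixes I :: "'i set"
  assumes "\<sigma> > 0" "finite I"
  shows "integrable (PiM I (\<lambda>_. density lborel (normal_density 0 \<sigma>))) (\<lambda>\<omega>. \<Prod>i\<in>I. \<omega> i ^ c i)
    \<and> integral\<^sup>L (PiM I (\<lambda>_. density lborel (normal_density 0 \<sigma>))) (\<lambda>\<omega>. \<Prod>i\<in>I. \<omega> i ^ c i)
      = (\<Prod>i\<in>I. gm \<sigma> (c i))"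
proof -
  interpret prob_space "density lborel (normal_density 0 \<sigma>)"
    using prob_space_normal_density[OF assms(1)] .
  interpret P: product_sigma_finite "\<lambda>_::'i. density lborel (normal_density 0 \<sigma>)"
    by unfold_locales
  show ?thesis
    using P.product_integrable_prod[OF assms(2), of "\<lambda>i z. z ^ c i"]
      P.product_integral_prod[OF assms(2), of "\<lambda>i z. z ^ c i"] gauss_mom[OF assms(1)]
    by auto
qed

lemma prod_ind: "finite I \<Longrightarrow> a \<in> I \<Longrightarrow> (\<Prod>i\<in>I. (f i::real) ^ (if i = a then 1 else 0)) = f a"
proof -
  assume "finite I" "a \<in> I"
  have "(\<Prod>i\<in>I. (f i::real) ^ (if i = a then 1 else 0)) = (\<Prod>i\<in>I. if i = a then f i else 1)"
    by (intro prod.cong) auto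
  also have "\<dots> = f a" using \<open>finite I\<close> \<open>a \<in> I\<close> by (simp add: prod.delta')
  finally show ?thesis .
qed

lemma isserlis4:
  fixes I :: "'i set"
  assumes "\<sigma> > 0" "finite I" "a \<in> I" "b \<in> I" "c \<in> I" "d \<in> I"
  shows "integrable (PiM I (\<lambda>_. density lborel (normal_density 0 \<sigma>))) (\<lambda>\<omega>. \<omega> a * \<omega> b * \<omega> c * \<omega> d)
    \<and> integral\<^sup>L (PiM I (\<lambda>_. density lborel (normal_density 0 \<sigma>))) (\<lambda>\<omega>. \<omega> a * \<omega> b * \<omega> c * \<omega> d)
      = \<sigma>^4 * (of_bool (a=b) * of_bool (c=d) + of_bool (a=c) * of_bool (b=d) + of_bool (a=d) * of_bool (b=c))"
proof -
  define cnt where "cnt i = (if i = a then 1 else 0) + (if i = b then 1 else 0) + (if i = c then 1 else 0) + (if i = d then 1 else (0::nat))" for i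
  have eq: "\<omega> a * \<omega> b * \<omega> c * \<omega> d = (\<Prod>i\<in>I. \<omega> i ^ cnt i)" for \<omega> :: "'i \<Rightarrow> real"
    unfolding cnt_def power_add prod.distrib
    using prod_ind[OF assms(2) assms(3)] prod_ind[OF assms(2) assms(4)] prod_ind[OF assms(2) assms(5)] prod_ind[OF assms(2) assms(6)]
    by simp
  have pm: "(\<Prod>i\<in>I. gm \<sigma> (cnt i)) = (\<Prod>i\<in>{a,b,c,d}. gm \<sigma> (cnt i))"
    using assms by (intro prod.mono_neutral_right) (auto simp: cnt_def gm_vals)
  have "(\<Prod>i\<in>{a,b,c,d}. gm \<sigma> (cnt i)) = \<sigma>^4 * (of_bool (a=b) * of_bool (c=d) + of_bool (a=c) * of_bool (b=d) + of_bool (a=d) * of_bool (b=c))"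
    using assms(1)
    by (cases "a=b"; cases "a=c"; cases "a=d"; cases "b=c"; cases "b=d"; cases "c=d")
       (simp_all add: cnt_def gm_vals gm_valsS power2_eq_square eval_nat_numeral insert_commute)
  then show ?thesis
    using prod_mom[OF assms(1,2), of cnt] pm by (simp add: eq)
qed

lemma isserlis2:
  fixes I :: "'i set"
  assumes "\<sigma> > 0" "finite I" "a \<in> I" "b \<in> I"
  shows "integrable (PiM I (\<lambda>_. density lborel (normal_density 0 \<sigma>))) (\<lambda>\<omega>. \<omega> a * \<omega> b)
    \<and> integral\<^sup>L (PiM I (\<lambda>_. density lborel (normal_density 0 \<sigma>))) (\<lambda>\<omega>. \<omega> a * \<omega> b)
      = \<sigma>\<^sup>2 * of_bool (a=b)"
proof -
  define cnt where "cnt i = (if i = a then 1 else 0) + (if i = b then 1 else (0::nat))" for i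
  have eq: "\<omega> a * \<omega> b = (\<Prod>i\<in>I. \<omega> i ^ cnt i)" for \<omega> :: "'i \<Rightarrow> real"
    unfolding cnt_def power_add prod.distrib
    using prod_ind[OF assms(2) assms(3)] prod_ind[OF assms(2) assms(4)]
    by simp
  have pm: "(\<Prod>i\<in>I. gm \<sigma> (cnt i)) = (\<Prod>i\<in>{a,b}. gm \<sigma> (cnt i))"
    using assms by (intro prod.mono_neutral_right) (auto simp: cnt_def gm_vals)
  have "(\<Prod>i\<in>{a,b}. gm \<sigma> (cnt i)) = \<sigma>\<^sup>2 * of_bool (a=b)"
    using assms(1)
    by (cases "a=b") (simp_all add: cnt_def gm_vals gm_valsS)
  then show ?thesis
    using prod_mom[OF assms(1,2), of cnt] pm by (simp add: eq)
qed



lemma shift_sum: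
  fixes h :: "nat \<Rightarrow> real"
  assumes "N > 0"
  shows "(\<Sum>n<N. h (nat ((int n + c) mod int N))) = (\<Sum>n<N. h n)"
proof (rule sum.reindex_bij_witness[where j = "\<lambda>n. nat ((int n + c) mod int N)" and i = "\<lambda>m. nat ((int m - c) mod int N)"])
  fix a assume "a \<in> {..<N}"
  then show "nat ((int (nat ((int a + c) mod int N)) - c) mod int N) = a"
    using assms by (simp add: mod_diff_left_eq)
next
  fix a assume "a \<in> {..<N}"
  then show "nat ((int (nat ((int a - c) mod int N)) + c) mod int N) = a"
    using assms by (simp add: mod_add_left_eq)
next
  fix a assume "a \<in> {..<N}"
  then show "nat ((int a - c) mod int N) \<in> {..<N}" using assms
    by (simp add: nat_less_iff)
next
  fix a assume "a \<in> {..<N}"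
  then show "nat ((int a + c) mod int N) \<in> {..<N}" using assms
    by (simp add: nat_less_iff)
qed simp

definition Gm :: "nat \<Rightarrow> (nat \<Rightarrow> real) \<Rightarrow> nat \<Rightarrow> nat \<Rightarrow> real" where
  "Gm N x k l = (\<Sum>n<N. x (nat ((int n - int k) mod int N)) * x (nat ((int n - int l) mod int N)))"

lemma Gm_autocorr:
  assumes "N > 0"
  shows "Gm N x k l = autocorr N x (int l - int k)"
proof -
  have "Gm N x k l = (\<Sum>n<N. (\<lambda>n. x (nat ((int n - int k) mod int N)) * x (nat ((int n - int l) mod int N))) (nat ((int n + int k) mod int N)))"
    unfolding Gm_def by (rule shift_sum[OF assms, symmetric])
  also have "\<dots> = autocorr N x (int l - int k)"
    unfolding autocorr_def
  proof (rule sum.cong[OF refl])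
    fix n assume n: "n \<in> {..<N}"
    have 1: "nat ((int (nat ((int n + int k) mod int N)) - int k) mod int N) = n"
      using assms n by (simp add: mod_diff_left_eq)
    have 2: "nat ((int (nat ((int n + int k) mod int N)) - int l) mod int N) = nat ((int n - (int l - int k)) mod int N)"
      using assms n by (simp add: mod_diff_left_eq algebra_simps)
    show "x (nat ((int (nat ((int n + int k) mod int N)) - int k) mod int N)) *
          x (nat ((int (nat ((int n + int k) mod int N)) - int l) mod int N)) =
          x n * x (nat ((int n - (int l - int k)) mod int N))"
      using 1 2 by simp
  qed
  finally show ?thesis .
qed

lemma Gm_diag:
  assumes "N > 0"
  shows "Gm N x k k = sq_norm_vec N x"
proof -
  have "Gm N x k k = (\<Sum>n<N. (\<lambda>n. (x (nat ((int n - int k) mod int N)))\<^sup>2) (nat ((int n + int k) mod int N)))"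
    unfolding Gm_def power2_eq_square by (rule shift_sum[OF assms, symmetric])
  also have "\<dots> = sq_norm_vec N x"
    unfolding sq_norm_vec_def
    using assms by (intro sum.cong refl) (simp add: mod_diff_left_eq)
  finally show ?thesis .
qed

lemma Y_expand:
  "filterbank_sq_norm N T J w x = (\<Sum>j<J. \<Sum>k<T. \<Sum>l<T. Gm N x k l * (w j k * w j l))"
  unfolding filterbank_sq_norm_def sq_norm_vec_def circ_conv_def Gm_def power2_eq_square
  by (simp add: sum_product sum_distrib_left sum_distrib_right algebra_simps sum.swap[of _ "{..<N}"])



lemma sym_sum: "(\<Sum>\<tau>\<in>{- int T..int T}. F \<tau>) = F 0 + (\<Sum>i<T. F (int i + 1) + F (- int i - 1))"
proof (induction T)
  case 0 then show ?case by simp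
next
  case (Suc T)
  have "{- int (Suc T)..int (Suc T)} = insert (- int T - 1) (insert (int T + 1) {- int T..int T})"
    by auto
  then have "(\<Sum>\<tau>\<in>{- int (Suc T)..int (Suc T)}. F \<tau>) = F (- int T - 1) + F (int T + 1) + (\<Sum>\<tau>\<in>{- int T..int T}. F \<tau>)"
    by (simp add: add.assoc)
  then show ?case using Suc by (simp add: algebra_simps)
qed

lemma comb:
  fixes F :: "int \<Rightarrow> real"
  shows "(\<Sum>k<T. \<Sum>l<T. F (int l - int k)) = (\<Sum>\<tau>\<in>{- int T..int T}. (real T - \<bar>real_of_int \<tau>\<bar>) * F \<tau>)"
proof (induction T)
  case 0 then show ?case by simp
next
  case (Suc T)
  have a: "(\<Sum>l<T. F (int l - int T)) = (\<Sum>i<T. F (- int i - 1))"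
    by (rule sum.nat_diff_reindex[symmetric, THEN trans]) (intro sum.cong refl arg_cong[where f=F]; simp add: of_nat_diff)
  have b: "(\<Sum>k<T. F (int T - int k)) = (\<Sum>i<T. F (int i + 1))"
    by (rule sum.nat_diff_reindex[symmetric, THEN trans]) (intro sum.cong refl arg_cong[where f=F]; simp add: of_nat_diff)
  have L: "(\<Sum>k<Suc T. \<Sum>l<Suc T. F (int l - int k)) = (\<Sum>k<T. \<Sum>l<T. F (int l - int k)) + (\<Sum>\<tau>\<in>{- int T..int T}. F \<tau>)"
    by (simp add: sum.distrib sym_sum a b)
  have "{- int (Suc T)..int (Suc T)} = insert (- int T - 1) (insert (int T + 1) {- int T..int T})"
    by auto
  then have "(\<Sum>\<tau>\<in>{- int (Suc T)..int (Suc T)}. (real (Suc T) - \<bar>real_of_int \<tau>\<bar>) * F \<tau>)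
      = (\<Sum>\<tau>\<in>{- int T..int T}. (real (Suc T) - \<bar>real_of_int \<tau>\<bar>) * F \<tau>)"
    by simp
  also have "\<dots> = (\<Sum>\<tau>\<in>{- int T..int T}. (real T - \<bar>real_of_int \<tau>\<bar>) * F \<tau>) + (\<Sum>\<tau>\<in>{- int T..int T}. F \<tau>)"
    by (simp add: sum.distrib[symmetric] algebra_simps)
  finally show ?case using L Suc by simp
qed



lemma T1:
  fixes G :: "nat \<Rightarrow> nat \<Rightarrow> real"
  shows "(\<Sum>j<J. \<Sum>k<T. \<Sum>l<T. \<Sum>j'<J. \<Sum>k'<T. \<Sum>l'<T. (G k l * G k' l') *
     (of_bool (k = l) * of_bool (k' = l'))) = (real J * (\<Sum>k<T. G k k))\<^sup>2"
proof -
  have "(\<Sum>j<J. \<Sum>k<T. \<Sum>l<T. \<Sum>j'<J. \<Sum>k'<T. \<Sum>l'<T. (G k l * G k' l') *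
     (of_bool (k = l) * of_bool (k' = l'))) =
     (\<Sum>j<J. \<Sum>k<T. \<Sum>l<T. \<Sum>j'<J. \<Sum>k'<T. \<Sum>l'<T. (if l = k then G k l else 0) * (if l' = k' then G k' l' else 0))"
    by (intro sum.cong refl) auto
  also have "\<dots> = (\<Sum>j<J. \<Sum>k<T. \<Sum>l<T. (if l = k then G k l else 0)) * (\<Sum>j'<J. \<Sum>k'<T. \<Sum>l'<T. (if l' = k' then G k' l' else 0))"
    unfolding sum_distrib_right by (simp only: sum_distrib_left)
  also have "\<dots> = (real J * (\<Sum>k<T. G k k))\<^sup>2"
    by (simp add: power2_eq_square)
  finally show ?thesis .
qed

lemma T2:
  fixes G :: "nat \<Rightarrow> nat \<Rightarrow> real"
  shows "(\<Sum>j<J. \<Sum>k<T. \<Sum>l<T. \<Sum>j'<J. \<Sum>k'<T. \<Sum>l'<T. (G k l * G k' l') *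
     (of_bool (j = j' \<and> k = k') * of_bool (l = l'))) = real J * (\<Sum>k<T. \<Sum>l<T. G k l * G k l)"
proof -
  have "(\<Sum>j<J. \<Sum>k<T. \<Sum>l<T. \<Sum>j'<J. \<Sum>k'<T. \<Sum>l'<T. (G k l * G k' l') *
     (of_bool (j = j' \<and> k = k') * of_bool (l = l'))) =
     (\<Sum>j<J. \<Sum>k<T. \<Sum>l<T. \<Sum>j'<J. \<Sum>k'<T. \<Sum>l'<T. (if l' = l then (if k' = k then (if j' = j then G k l * G k' l' else 0) else 0) else 0))"
    by (intro sum.cong refl) auto
  also have "\<dots> = real J * (\<Sum>k<T. \<Sum>l<T. G k l * G k l)"
    by simp
  finally show ?thesis .
qed

lemma T3:
  fixes G :: "nat \<Rightarrow> nat \<Rightarrow> real"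
  shows "(\<Sum>j<J. \<Sum>k<T. \<Sum>l<T. \<Sum>j'<J. \<Sum>k'<T. \<Sum>l'<T. (G k l * G k' l') *
     (of_bool (j = j' \<and> k = l') * of_bool (l = k'))) = real J * (\<Sum>k<T. \<Sum>l<T. G k l * G l k)"
proof -
  have "(\<Sum>j<J. \<Sum>k<T. \<Sum>l<T. \<Sum>j'<J. \<Sum>k'<T. \<Sum>l'<T. (G k l * G k' l') *
     (of_bool (j = j' \<and> k = l') * of_bool (l = k'))) =
     (\<Sum>j<J. \<Sum>k<T. \<Sum>l<T. \<Sum>j'<J. \<Sum>k'<T. \<Sum>l'<T. (if l' = k then (if k' = l then (if j' = j then G k l * G k' l' else 0) else 0) else 0))"
    by (intro sum.cong refl) auto
  also have "\<dots> = real J * (\<Sum>k<T. \<Sum>l<T. G k l * G l k)"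
    by simp
  finally show ?thesis .
qed



theorem proposition1:
  fixes N T J :: nat and \<sigma> :: real and x :: "nat \<Rightarrow> real"
  assumes "1 \<le> T" and "T \<le> N" and "1 \<le> J" and "\<sigma> > 0"
  defines "M \<equiv> gauss_filters J T \<sigma>"
    and "Y \<equiv> (\<lambda>\<omega>. filterbank_sq_norm N T J (\<lambda>j k. \<omega> (j, k)) x)"
  shows "(\<integral>\<omega>. Y \<omega> \<partial>M) = real J * real T * \<sigma>\<^sup>2 * sq_norm_vec N x \<and>
         (\<integral>\<omega>. (Y \<omega> - (\<integral>\<omega>'. Y \<omega>' \<partial>M))\<^sup>2 \<partial>M)
           = 2 * real J * \<sigma> ^ 4 *
             (\<Sum>\<tau>\<in>{- int T..int T}. (real T - \<bar>real_of_int \<tau>\<bar>) * (autocorr N x \<tau>)\<^sup>2)"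
proof -
  let ?I = "{..<J} \<times> {..<T}"
  define G where "G = Gm N x"
  have N0: "N > 0" using assms(1,2) by simp
  have fin: "finite ?I" by simp
  have M: "M = PiM ?I (\<lambda>_. density lborel (normal_density 0 \<sigma>))"
    unfolding M_def gauss_filters_def ..
  interpret W: prob_space "density lborel (normal_density 0 \<sigma>)"
    using prob_space_normal_density[OF assms(4)] .
  interpret P: product_prob_space "\<lambda>_::nat\<times>nat. density lborel (normal_density 0 \<sigma>)" ?I
    by unfold_locales
  interpret MP: prob_space M unfolding M by (rule P.prob_space_axioms)
  have Yeq: "Y = (\<lambda>\<omega>. \<Sum>j<J. \<Sum>k<T. \<Sum>l<T. G k l * (\<omega> (j,k) * \<omega> (j,l)))"
    unfolding Y_def G_def Y_expand ..
  have i2: "integrable M (\<lambda>\<omega>. \<omega> (j,k) * \<omega> (j,l)) \<and> integral\<^sup>L M (\<lambda>\<omega>. \<omega> (j,k) * \<omega> (j,l)) = \<sigma>\<^sup>2 * of_bool (k = l)"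
    if "j < J" "k < T" "l < T" for j k l
    using isserlis2[OF assms(4) fin, of "(j,k)" "(j,l)"] that unfolding M by simp
  have i4: "integrable M (\<lambda>\<omega>. \<omega> (j,k) * \<omega> (j,l) * \<omega> (j',k') * \<omega> (j',l')) \<and>
     integral\<^sup>L M (\<lambda>\<omega>. \<omega> (j,k) * \<omega> (j,l) * \<omega> (j',k') * \<omega> (j',l')) =
     \<sigma>^4 * (of_bool (k = l) * of_bool (k' = l') + of_bool (j = j' \<and> k = k') * of_bool (l = l')
        + of_bool (j = j' \<and> k = l') * of_bool (l = k'))"
    if "j < J" "k < T" "l < T" "j' < J" "k' < T" "l' < T" for j k l j' k' l'
    using isserlis4[OF assms(4) fin, of "(j,k)" "(j,l)" "(j',k')" "(j',l')"] that unfolding M by simp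
  have intY: "integrable M Y"
    unfolding Yeq apply (rule Bochner_Integration.integrable_sum)+ apply (rule integrable_mult_right) using i2 by auto
  have EY0: "integral\<^sup>L M Y = (\<Sum>j<J. \<Sum>k<T. \<Sum>l<T. G k l * (\<sigma>\<^sup>2 * of_bool (k = l)))"
  proof -
    have "integral\<^sup>L M Y = (\<Sum>j<J. \<Sum>k<T. \<Sum>l<T. integral\<^sup>L M (\<lambda>\<omega>. G k l * (\<omega> (j,k) * \<omega> (j,l))))"
      unfolding Yeq using int_sum3[of "{..<J}" "{..<T}" "{..<T}" M "\<lambda>j k l \<omega>. G k l * (\<omega> (j,k) * \<omega> (j,l))"] i2 by simp
    also have "\<dots> = (\<Sum>j<J. \<Sum>k<T. \<Sum>l<T. G k l * (\<sigma>\<^sup>2 * of_bool (k = l)))"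
      using i2 by (intro sum.cong refl) simp
    finally show ?thesis .
  qed
  also have "\<dots> = (\<Sum>j<J. \<Sum>k<T. \<Sum>l<T. (if l = k then \<sigma>\<^sup>2 * G k l else 0))"
    by (intro sum.cong refl) auto
  also have "\<dots> = real J * \<sigma>\<^sup>2 * (\<Sum>k<T. G k k)"
    by (simp add: sum_distrib_left mult_ac)
  finally have EY1: "integral\<^sup>L M Y = real J * \<sigma>\<^sup>2 * (\<Sum>k<T. G k k)" .
  have Gd: "G k k = sq_norm_vec N x" for k unfolding G_def using Gm_diag[OF N0] .
  have EY: "integral\<^sup>L M Y = real J * real T * \<sigma>\<^sup>2 * sq_norm_vec N x"
    unfolding EY1 Gd by simp
  have Y2eq: "(\<lambda>\<omega>. (Y \<omega>)\<^sup>2) = (\<lambda>\<omega>. \<Sum>j<J. \<Sum>k<T. \<Sum>l<T. \<Sum>j'<J. \<Sum>k'<T. \<Sum>l'<T.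
      (G k l * G k' l') * (\<omega> (j,k) * \<omega> (j,l) * \<omega> (j',k') * \<omega> (j',l')))"
    unfolding Yeq power2_eq_square sum_distrib_right sum_distrib_left
    by (intro ext sum.cong refl) (simp add: mult_ac)
  have intY2: "integrable M (\<lambda>\<omega>. (Y \<omega>)\<^sup>2)"
    unfolding Y2eq apply (rule Bochner_Integration.integrable_sum)+ apply (rule integrable_mult_right) using i4 by auto
  have EY2: "integral\<^sup>L M (\<lambda>\<omega>. (Y \<omega>)\<^sup>2) = (\<Sum>j<J. \<Sum>k<T. \<Sum>l<T. \<Sum>j'<J. \<Sum>k'<T. \<Sum>l'<T.
      (G k l * G k' l') * (\<sigma>^4 * (of_bool (k = l) * of_bool (k' = l') + of_bool (j = j' \<and> k = k') * of_bool (l = l')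
        + of_bool (j = j' \<and> k = l') * of_bool (l = k'))))"
  proof -
    have "integral\<^sup>L M (\<lambda>\<omega>. (Y \<omega>)\<^sup>2) = (\<Sum>j<J. \<Sum>k<T. \<Sum>l<T. \<Sum>j'<J. \<Sum>k'<T. \<Sum>l'<T. integral\<^sup>L M (\<lambda>\<omega>. 
      (G k l * G k' l') * (\<omega> (j,k) * \<omega> (j,l) * \<omega> (j',k') * \<omega> (j',l'))))"
      unfolding Y2eq using int_sum6[of "{..<J}" "{..<T}" "{..<T}" M "\<lambda>j k l j' k' l' \<omega>. (G k l * G k' l') * (\<omega> (j,k) * \<omega> (j,l) * \<omega> (j',k') * \<omega> (j',l'))"] i4 by simp
    also have "\<dots> = (\<Sum>j<J. \<Sum>k<T. \<Sum>l<T. \<Sum>j'<J. \<Sum>k'<T. \<Sum>l'<T.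
      (G k l * G k' l') * (\<sigma>^4 * (of_bool (k = l) * of_bool (k' = l') + of_bool (j = j' \<and> k = k') * of_bool (l = l')
        + of_bool (j = j' \<and> k = l') * of_bool (l = k'))))"
      using i4 by (intro sum.cong refl) simp
    finally show ?thesis .
  qed
  also have "\<dots> = (\<Sum>j<J. \<Sum>k<T. \<Sum>l<T. \<Sum>j'<J. \<Sum>k'<T. \<Sum>l'<T. \<sigma>^4 * ((G k l * G k' l') * (of_bool (k = l) * of_bool (k' = l'))) + \<sigma>^4 * ((G k l * G k' l') * (of_bool (j = j' \<and> k = k') * of_bool (l = l'))) + \<sigma>^4 * ((G k l * G k' l') * (of_bool (j = j' \<and> k = l') * of_bool (l = k'))))"
    by (intro sum.cong refl) (simp only: distrib_left mult_ac)
  also have "\<dots> = \<sigma>^4 * ((\<Sum>j<J. \<Sum>k<T. \<Sum>l<T. \<Sum>j'<J. \<Sum>k'<T. \<Sum>l'<T. (G k l * G k' l') *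
     (of_bool (k = l) * of_bool (k' = l'))) + (\<Sum>j<J. \<Sum>k<T. \<Sum>l<T. \<Sum>j'<J. \<Sum>k'<T. \<Sum>l'<T. (G k l * G k' l') *
     (of_bool (j = j' \<and> k = k') * of_bool (l = l'))) + (\<Sum>j<J. \<Sum>k<T. \<Sum>l<T. \<Sum>j'<J. \<Sum>k'<T. \<Sum>l'<T. (G k l * G k' l') *
     (of_bool (j = j' \<and> k = l') * of_bool (l = k'))))"
    by (simp only: sum.distrib sum_distrib_left distrib_left)
  also have "\<dots> = \<sigma>^4 * ((real J * (\<Sum>k<T. G k k))\<^sup>2 + 2 * real J * (\<Sum>k<T. \<Sum>l<T. (G k l)\<^sup>2))"
  proof -
    have Gs: "G l k = G k l" for k l unfolding G_def Gm_def by (simp add: mult.commute)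
    have s2: "(\<Sum>k<T. \<Sum>l<T. G k l * G l k) = (\<Sum>k<T. \<Sum>l<T. (G k l)\<^sup>2)"
      by (intro sum.cong refl) (simp only: Gs power2_eq_square)
    have s3: "(\<Sum>k<T. \<Sum>l<T. G k l * G k l) = (\<Sum>k<T. \<Sum>l<T. (G k l)\<^sup>2)"
      by (simp only: power2_eq_square)
    have e: "\<And>A B s j::real. s * (A + j * B + j * B) = s * (A + 2 * j * B)" by algebra
    show ?thesis unfolding T1 T2 T3 s2 s3 by (rule e)
  qed
  finally have EY2': "integral\<^sup>L M (\<lambda>\<omega>. (Y \<omega>)\<^sup>2) = \<sigma>^4 * ((real J * (\<Sum>k<T. G k k))\<^sup>2 + 2 * real J * (\<Sum>k<T. \<Sum>l<T. (G k l)\<^sup>2))" .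
  define c where "c = integral\<^sup>L M Y"
  have "(\<integral>\<omega>. (Y \<omega> - c)\<^sup>2 \<partial>M) = (\<integral>\<omega>. ((Y \<omega>)\<^sup>2 - 2 * c * Y \<omega>) + c\<^sup>2 \<partial>M)"
    by (intro Bochner_Integration.integral_cong refl) (simp add: power2_eq_square algebra_simps)
  also have "\<dots> = integral\<^sup>L M (\<lambda>\<omega>. (Y \<omega>)\<^sup>2) - 2 * c * c + c\<^sup>2"
    using intY intY2 by (simp add: c_def MP.prob_space)
  also have "\<dots> = 2 * real J * \<sigma>^4 * (\<Sum>k<T. \<Sum>l<T. (G k l)\<^sup>2)"
    unfolding EY2' c_def EY1 by (simp add: power2_eq_square algebra_simps power4_eq_xxxx)
  also have "(\<Sum>k<T. \<Sum>l<T. (G k l)\<^sup>2) = (\<Sum>k<T. \<Sum>l<T. (autocorr N x (int l - int k))\<^sup>2)"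
    unfolding G_def Gm_autocorr[OF N0] ..
  also have "\<dots> = (\<Sum>\<tau>\<in>{- int T..int T}. (real T - \<bar>real_of_int \<tau>\<bar>) * (autocorr N x \<tau>)\<^sup>2)"
    by (rule comb)
  finally show ?thesis using EY unfolding c_def by simp
qed

end
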